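(* Let $p,n\in\mathbb N$ with $p\ge n\ge 10$ and $p=k(n-1)+n-6$ for some $k\in\mathbb N$. Then $$\mathrm{ex}(p;T_n^3)=\frac{(n-2)p-5(n-6)}2.$$
   Context: All graphs are finite simple graphs. For a graph $L$, $\mathrm{ex}(p;L)$ denotes the maximum number of edges in a graph on $p$ vertices that contains no subgraph isomorphic to $L$. For $n\ge 6$, $T_n^3$ is the tree on vertex set $\{v_0,\ldots,v_{n-1}\}$ with edge set $\{v_0v_1,v_0v_2,\ldots,v_0v_{n-4},\ v_1v_{n-3},\ v_1v_{n-2},\ v_1v_{n-1}\}$. $\mathbb N=\{1,2,\ldots\}$. *)

theory Defs
  imports Complex_Main
begin

definition simple_graph_on :: "'a set \<Rightarrow> 'a set set \<Rightarrow> bool" where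
  "simple_graph_on V E \<longleftrightarrow> finite V \<and>
     E \<subseteq> {e. \<exists>u v. u \<in> V \<and> v \<in> V \<and> u \<noteq> v \<and> e = {u, v}}"

definition contains_copy :: "'a set \<Rightarrow> 'a set set \<Rightarrow> 'b set \<Rightarrow> 'b set set \<Rightarrow> bool" where
  "contains_copy V E VL EL \<longleftrightarrow>
     (\<exists>f. inj_on f VL \<and> f ` VL \<subseteq> V \<and> (\<forall>u v. {u, v} \<in> EL \<longrightarrow> {f u, f v} \<in> E))"

definition ex :: "nat \<Rightarrow> 'b set \<Rightarrow> 'b set set \<Rightarrow> nat" where
  "ex p VL EL = Max {card E | E. simple_graph_on {0..<p} E \<and> \<not> contains_copy {0..<p} E VL EL}"

text \<open>The tree T_n^3 on vertices v_0..v_{n-1}, represented as 0..n-1.\<close>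
definition T3_vertices :: "nat \<Rightarrow> nat set" where
  "T3_vertices n = {0..<n}"

definition T3_edges :: "nat \<Rightarrow> nat set set" where
  "T3_edges n = {{0, i} | i. 1 \<le> i \<and> i \<le> n - 4} \<union> {{1, n - 3}, {1, n - 2}, {1, n - 1}}"

end

theory Submission
  imports Defs
begin


definition nb :: "'a set set \<Rightarrow> 'a \<Rightarrow> 'a set" where "nb E v = {u. {v,u} \<in> E}"
definition dg :: "'a set set \<Rightarrow> 'a \<Rightarrow> nat" where "dg E v = card (nb E v)"

lemma sg_nb_sub: "simple_graph_on V E \<Longrightarrow> nb E v \<subseteq> V"
  unfolding simple_graph_on_def nb_def by (auto simp: doubleton_eq_iff)

lemma sg_fin: "simple_graph_on V E \<Longrightarrow> finite V"
  unfolding simple_graph_on_def by auto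

lemma sg_nb_fin: "simple_graph_on V E \<Longrightarrow> finite (nb E v)"
  using sg_nb_sub sg_fin finite_subset by metis

lemma sg_nb_irr: "simple_graph_on V E \<Longrightarrow> v \<notin> nb E v"
  unfolding simple_graph_on_def nb_def by (auto simp: doubleton_eq_iff)

lemma nb_sym: "u \<in> nb E v \<longleftrightarrow> v \<in> nb E u"
  unfolding nb_def by (simp add: insert_commute)

lemma sg_edge_in: "simple_graph_on V E \<Longrightarrow> {a,b} \<in> E \<Longrightarrow> a \<in> V \<and> b \<in> V \<and> a \<noteq> b"
  unfolding simple_graph_on_def by (auto simp: doubleton_eq_iff)

lemma embed:
  assumes sg: "simple_graph_on V E" and n: "n \<ge> 10"
    and e: "{v0,v1} \<in> E"
    and A: "A \<subseteq> nb E v0 - {v1}" "card A = n - 5"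
    and B: "B \<subseteq> nb E v1 - {v0}" "card B = 3"
    and AB: "A \<inter> B = {}"
  shows "contains_copy V E (T3_vertices n) (T3_edges n)"
proof -
  have finA: "finite A" using A(1) sg_nb_fin[OF sg] finite_subset by blast
  obtain h where h: "bij_betw h {2..<n-3} A"
  proof -
    have "card {2..<n-3} = card A" using A(2) by simp
    then show ?thesis using finite_same_card_bij[OF _ finA, of "{2..<n-3}"] that by blast
  qed
  obtain b1 b2 b3 where b: "B = {b1,b2,b3}" "b1\<noteq>b2" "b2\<noteq>b3" "b1\<noteq>b3"
    using B(2) card_3_iff by metis
  have v01: "v0 \<in> V" "v1 \<in> V" "v0 \<noteq> v1" using sg_edge_in[OF sg e] by auto
  have v0A: "v0 \<notin> A" using A(1) sg_nb_irr[OF sg] by auto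
  have v1A: "v1 \<notin> A" using A(1) by auto
  have v0B: "v0 \<notin> B" using B(1) by auto
  have v1B: "v1 \<notin> B" using B(1) sg_nb_irr[OF sg] by auto
  define f where "f i = (if i = 0 then v0 else if i = 1 then v1 else if i < n-3 then h i
      else if i = n-3 then b1 else if i = n-2 then b2 else b3)" for i
  have hA: "\<And>i. 2 \<le> i \<Longrightarrow> i < n-3 \<Longrightarrow> h i \<in> A" using h bij_betwE by fastforce
  have b123: "b1 \<in> B" "b2 \<in> B" "b3 \<in> B" using b by auto
  define c where "c x = (if x = v0 then 0 else if x = v1 then 1 else if x \<in> A then inv_into {2..<n-3} h x
      else if x = b1 then n-3 else if x = b2 then n-2 else n-1)" for x
  have hinj: "inj_on h {2..<n-3}" using h bij_betw_def by blast
  have inj: "inj_on f {0..<n}"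
  proof (rule inj_on_inverseI[where g = c])
    fix k assume k: "k \<in> {0..<n}"
    have "k = 0 \<or> k = 1 \<or> (2 \<le> k \<and> k < n-3) \<or> k = n-3 \<or> k = n-2 \<or> k = n-1"
      using n k by (simp only: atLeastLessThan_iff) presburger
    then consider "k = 0" | "k = 1" | "2 \<le> k" "k < n-3" | "k = n-3" | "k = n-2" | "k = n-1"
      by blast
    then show "c (f k) = k"
    proof cases
      case 1 then show ?thesis unfolding c_def f_def by simp
    next
      case 2 then show ?thesis unfolding c_def f_def using v01 by simp
    next
      case 3
      then have fk: "f k = h k" unfolding f_def by simp
      have "h k \<in> A" using hA 3 by simp
      moreover have "inv_into {2..<n-3} h (h k) = k" using inv_into_f_f[OF hinj] 3 by simp
      ultimately show ?thesis unfolding c_def fk using v0A v1A by auto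
    next
      case 4 then have "f k = b1" unfolding f_def using n by auto
      then show ?thesis unfolding c_def using b123 v0B v1B AB 4 by auto
    next
      case 5 then have "f k = b2" unfolding f_def using n by auto
      then show ?thesis unfolding c_def using b123 v0B v1B AB 5 b by auto
    next
      case 6 then have "f k = b3" unfolding f_def using n by auto
      then show ?thesis unfolding c_def using b123 v0B v1B AB 6 b by auto
    qed
  qed
  have img: "f ` {0..<n} \<subseteq> V"
  proof -
    have "A \<subseteq> V" "B \<subseteq> V" using A(1) B(1) sg_nb_sub[OF sg] by auto
    then show ?thesis using hA v01 b unfolding f_def by auto
  qed
  have edges: "\<forall>u v. {u, v} \<in> T3_edges n \<longrightarrow> {f u, f v} \<in> E"
  proof (intro allI impI)
    fix u v assume uv: "{u,v} \<in> T3_edges n"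
    have fuv: "{f u, f v} = f ` {u,v}" by auto
    have e1: "\<And>i. 1 \<le> i \<Longrightarrow> i \<le> n - 4 \<Longrightarrow> f ` {0,i} \<in> E"
    proof -
      fix i assume "1 \<le> i" "i \<le> n-4"
      then consider "i = 1" | "2 \<le> i" "i < n-3" using n by linarith
      then show "f ` {0,i} \<in> E"
      proof cases
        case 1 then show ?thesis using e f_def by (simp add: insert_commute)
      next
        case 2
        then have "h i \<in> nb E v0" using hA A(1) by auto
        then show ?thesis using 2 n unfolding f_def nb_def by (auto simp: insert_commute)
      qed
    qed
    have b1e: "{v1, b1} \<in> E" "{v1,b2} \<in> E" "{v1,b3} \<in> E" using B(1) b unfolding nb_def by auto
    have e2: "f ` {1, n-3} \<in> E" "f ` {1, n-2} \<in> E" "f ` {1, n-1} \<in> E"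
      using b1e n unfolding f_def by (auto simp: insert_commute)
    from uv consider (a) i where "1 \<le> i" "i \<le> n-4" "{u,v} = {0,i}"
      | (b) "{u,v} = {1,n-3}" | (c) "{u,v} = {1,n-2}" | (d) "{u,v} = {1,n-1}"
      unfolding T3_edges_def by auto
    then show "{f u, f v} \<in> E"
    proof cases
      case a then show ?thesis using e1 fuv by metis
    qed (use e2 fuv in metis)+
  qed
  show ?thesis unfolding contains_copy_def T3_vertices_def using inj img edges by blast
qed




lemma F:
  assumes sg: "simple_graph_on V E" and tf: "\<not> contains_copy V E (T3_vertices n) (T3_edges n)"
    and n: "n \<ge> 10" and e: "{v0,v1} \<in> E" and d0: "dg E v0 \<ge> n - 4" and d1: "dg E v1 \<ge> 4"
  shows "dg E v0 + card (nb E v1 - insert v0 (nb E v0)) \<le> n - 2"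
proof (rule ccontr)
  assume "\<not> ?thesis"
  then have big: "dg E v0 + card (nb E v1 - insert v0 (nb E v0)) \<ge> n - 1" by linarith
  define A0 where "A0 = nb E v0 - {v1}"
  define B0 where "B0 = nb E v1 - {v0}"
  define X where "X = nb E v1 - insert v0 (nb E v0)"
  have v1n: "v1 \<in> nb E v0" and v0n: "v0 \<in> nb E v1" using e unfolding nb_def by (auto simp: insert_commute)
  have fin0: "finite (nb E v0)" "finite (nb E v1)" using sg_nb_fin[OF sg] by auto
  have cA0: "card A0 = dg E v0 - 1" unfolding A0_def dg_def using v1n fin0 by simp
  have cB0: "card B0 = dg E v1 - 1" unfolding B0_def dg_def using v0n fin0 by simp
  have XB0: "X \<subseteq> B0" unfolding X_def B0_def by auto
  have XA0: "X \<inter> A0 = {}" unfolding X_def A0_def by auto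
  have finB0: "finite B0" "finite A0" unfolding B0_def A0_def using fin0 by auto
  have B0X: "B0 - X = B0 \<inter> A0" unfolding X_def B0_def A0_def using sg_nb_irr[OF sg, of v1] by auto
  have big': "dg E v0 + card X \<ge> n - 1" using big X_def by simp
  show False
  proof (cases "card X \<ge> 3")
    case True
    obtain B where B: "B \<subseteq> X" "card B = 3" using obtain_subset_with_card_n[OF True] by blast
    have "n - 5 \<le> card A0" using cA0 d0 n by linarith
    then obtain A where A: "A \<subseteq> A0" "card A = n - 5" using obtain_subset_with_card_n by metis
    have a1: "A \<subseteq> nb E v0 - {v1}" using A(1) unfolding A0_def .
    have b1: "B \<subseteq> nb E v1 - {v0}" using B(1) XB0 unfolding B0_def by (rule subset_trans)
    have ab: "A \<inter> B = {}" using A(1) B(1) XA0 by blast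
    have "contains_copy V E (T3_vertices n) (T3_edges n)"
      by (rule embed[OF sg n e a1 A(2) b1 B(2) ab])
    then show False using tf by simp
  next
    case False
    have cX: "card (B0 \<inter> A0) = card B0 - card X" using card_Diff_subset[OF _ XB0] B0X finB0 finite_subset[OF XB0] by auto
    have "3 - card X \<le> card (B0 \<inter> A0)" using cX cB0 d1 by linarith
    then obtain Y where Y: "Y \<subseteq> B0 \<inter> A0" "card Y = 3 - card X" using obtain_subset_with_card_n by metis
    have finY: "finite Y" using Y finB0 finite_subset by blast
    have cAY: "card (A0 - Y) = card A0 - card Y" using Y finY card_Diff_subset by (metis Int_subset_iff)
    have "n - 5 \<le> card (A0 - Y)" using cAY cA0 Y(2) big' False d0 n by linarith
    then obtain A where A: "A \<subseteq> A0 - Y" "card A = n - 5" using obtain_subset_with_card_n by metis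
    have finX: "finite X" using finite_subset[OF XB0] finB0 by auto
    have XY: "X \<inter> Y = {}" using Y XA0 by auto
    have cB: "card (X \<union> Y) = 3" using card_Un_disjoint[OF finX finY XY] Y(2) False by simp
    have a1: "A \<subseteq> nb E v0 - {v1}" using A(1) unfolding A0_def by blast
    have b1: "X \<union> Y \<subseteq> nb E v1 - {v0}" using Y(1) XB0 unfolding B0_def by blast
    have ab: "A \<inter> (X \<union> Y) = {}" using A(1) XA0 by blast
    have "contains_copy V E (T3_vertices n) (T3_edges n)"
      by (rule embed[OF sg n e a1 A(2) b1 cB ab])
    then show False using tf by simp
  qed
qed



definition rm :: "'a set set \<Rightarrow> 'a set \<Rightarrow> 'a set set" where "rm E S = {e \<in> E. e \<inter> S = {}}"

lemma sg_rm: assumes "simple_graph_on V E" shows "simple_graph_on (V - S) (rm E S)"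
  unfolding simple_graph_on_def
proof (intro conjI subsetI)
  show "finite (V - S)" using assms sg_fin by blast
  fix e assume "e \<in> rm E S"
  then have e: "e \<in> E" "e \<inter> S = {}" unfolding rm_def by auto
  then obtain u v where "u \<in> V" "v \<in> V" "u \<noteq> v" "e = {u,v}" using assms unfolding simple_graph_on_def by blast
  then show "e \<in> {e. \<exists>u v. u \<in> V - S \<and> v \<in> V - S \<and> u \<noteq> v \<and> e = {u, v}}" using e(2) by auto
qed

lemma tf_rm: assumes "\<not> contains_copy V E VL EL" shows "\<not> contains_copy (V - S) (rm E S) VL EL"
proof
  assume "contains_copy (V - S) (rm E S) VL EL"
  then obtain f where f: "inj_on f VL" "f ` VL \<subseteq> V - S" "\<forall>u v. {u, v} \<in> EL \<longrightarrow> {f u, f v} \<in> rm E S"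
    unfolding contains_copy_def by blast
  have "f ` VL \<subseteq> V" using f(2) by blast
  moreover have "\<forall>u v. {u, v} \<in> EL \<longrightarrow> {f u, f v} \<in> E" using f(3) unfolding rm_def by blast
  ultimately have "contains_copy V E VL EL" unfolding contains_copy_def using f(1) by blast
  then show False using assms by simp
qed

lemma nb_rm: "w \<notin> S \<Longrightarrow> nb (rm E S) w = nb E w - S"
  unfolding nb_def rm_def by auto


lemma swap:
  assumes "finite A" "finite B"
  shows "(\<Sum>a\<in>A. card (nb E a \<inter> B)) = (\<Sum>b\<in>B. card (nb E b \<inter> A))"
proof -
  have c: "card (nb E a \<inter> B) = (\<Sum>b\<in>B. if {a,b} \<in> E then 1 else 0)" if "finite B" for a B
  proof -
    have e: "nb E a \<inter> B = {b \<in> B. {a,b} \<in> E}" unfolding nb_def by auto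
    have "(\<Sum>b\<in>B. if {a,b} \<in> E then 1 else 0) = (\<Sum>b\<in>{b \<in> B. {a,b} \<in> E}. (1::nat))"
      by (rule sum.inter_filter[symmetric]) (fact that)
    then show ?thesis unfolding e by simp
  qed
  have "(\<Sum>a\<in>A. card (nb E a \<inter> B)) = (\<Sum>a\<in>A. \<Sum>b\<in>B. if {a,b} \<in> E then 1 else 0)"
    using c[OF assms(2)] by (intro sum.cong) auto
  also have "\<dots> = (\<Sum>b\<in>B. \<Sum>a\<in>A. if {a,b} \<in> E then 1 else 0)" by (rule sum.swap)
  also have "\<dots> = (\<Sum>b\<in>B. \<Sum>a\<in>A. if {b,a} \<in> E then 1 else 0)" by (simp add: insert_commute)
  also have "\<dots> = (\<Sum>b\<in>B. card (nb E b \<inter> A))" using c[OF assms(1)] by (intro sum.cong) auto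
  finally show ?thesis .
qed



definition phi :: "nat \<Rightarrow> nat \<Rightarrow> int" where
  "phi n x = min (5 * int (x mod (n-1))) (int (n-6) * int (n-1-x mod (n-1)))"

lemma minlem1: "(P::int) \<le> Q \<Longrightarrow> P \<le> R \<Longrightarrow> 0 \<le> Q \<Longrightarrow> 0 \<le> R \<Longrightarrow> 0 \<le> a \<Longrightarrow> 0 \<le> b
   \<Longrightarrow> min (a+b) P \<le> min a Q + min b R"
  unfolding min_def by auto

lemma minlem2: "(s::int) \<le> a \<Longrightarrow> s \<le> b \<Longrightarrow> 0 \<le> Q \<Longrightarrow> 0 \<le> R \<Longrightarrow> 0 \<le> a \<Longrightarrow> 0 \<le> b
   \<Longrightarrow> min s (Q + R) \<le> min a Q + min b R"
  unfolding min_def by auto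

lemma phi_res:
  fixes m c x y :: nat
  assumes "x < m" "y < m"
  shows "min (5 * int ((x+y) mod m)) (int c * int (m - (x+y) mod m))
     \<le> min (5 * int x) (int c * int (m - x)) + min (5 * int y) (int c * int (m - y))"
proof (cases "x + y < m")
  case True
  then have r: "(x+y) mod m = x + y" by simp
  have h1: "int c * int (m - (x+y)) \<le> int c * int (m - y)" by (intro mult_left_mono) auto
  have h2: "int c * int (m - (x+y)) \<le> int c * int (m - x)" by (intro mult_left_mono) auto
  have p1: "0 \<le> int c * int (m - x)" "0 \<le> int c * int (m - y)" by auto
  have p2: "0 \<le> int x" "0 \<le> int y" by auto
  have "5 * int (x+y) = 5 * int x + 5 * int y" by simp
  then show ?thesis unfolding r using minlem1[OF h2 h1 p1] by simp
next
  case False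
  then have r: "(x+y) mod m = x + y - m" using assms by (simp add: mod_if)
  have e0: "int (m - (x + y - m)) = int (m - x) + int (m - y)" using False assms by linarith
  have e: "int c * int (m - (x + y - m)) = int c * int (m - x) + int c * int (m - y)"
    unfolding e0 by (simp add: distrib_left)
  have f1: "5 * int (x + y - m) \<le> 5 * int x" using assms False by linarith
  have f2: "5 * int (x + y - m) \<le> 5 * int y" using assms False by linarith
  have g1: "0 \<le> int c * int (m - y)" "0 \<le> int c * int (m - x)" by auto
  show ?thesis unfolding r e by (rule minlem2[OF f1 f2 g1(2) g1(1)]) auto
qed

lemma phi_sub:
  assumes "n \<ge> 10"
  shows "phi n (a + b) \<le> phi n a + phi n b"
proof -
  define m where "m = n - 1"
  have m: "m > 0" using assms m_def by simp
  have eq: "(a+b) mod m = (a mod m + b mod m) mod m" by (simp add: mod_add_eq)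
  have "phi n (a+b) = min (5 * int ((a mod m + b mod m) mod m)) (int (n-6) * int (m - (a mod m + b mod m) mod m))"
    unfolding phi_def m_def[symmetric] eq ..
  also have "\<dots> \<le> min (5 * int (a mod m)) (int (n-6) * int (m - a mod m)) + min (5 * int (b mod m)) (int (n-6) * int (m - b mod m))"
    by (rule phi_res) (use m in auto)
  also have "\<dots> = phi n a + phi n b" unfolding phi_def m_def ..
  finally show ?thesis .
qed

lemma phi_le5: "n \<ge> 10 \<Longrightarrow> phi n x \<le> 5 * int (n-6)"
proof -
  assume n: "n \<ge> 10"
  define r where "r = x mod (n-1)"
  have rl: "r < n - 1" using n r_def by simp
  have ph: "phi n x = min (5 * int r) (int (n-6) * int (n-1-r))" unfolding phi_def r_def ..
  show ?thesis
  proof (cases "r \<le> n - 6")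
    case True then have "5 * int r \<le> 5 * int (n-6)" by simp
    then show ?thesis unfolding ph by linarith
  next
    case False
    then have "n - 1 - r \<le> 5" by linarith
    then have "int (n-6) * int (n-1-r) \<le> int (n-6) * 5" by (intro mult_left_mono) auto
    then show ?thesis unfolding ph by linarith
  qed
qed

lemma phi_small: "n \<ge> 10 \<Longrightarrow> x \<le> n - 1 \<Longrightarrow> phi n x \<le> int x * int (n - 1 - x)"
proof -
  assume n: "n \<ge> 10" and x: "x \<le> n - 1"
  show ?thesis
  proof (cases "x = n - 1")
    case True then show ?thesis unfolding phi_def by simp
  next
    case False
    then have r: "x mod (n-1) = x" using x by simp
    have ph: "phi n x = min (5 * int x) (int (n-6) * int (n-1-x))" unfolding phi_def r ..
    show ?thesis
    proof (cases "x \<le> n - 6")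
      case True
      then have "5 \<le> int (n-1-x)" using n by linarith
      then have "5 * int x \<le> int x * int (n-1-x)" by (simp add: mult.commute mult_left_mono)
      then show ?thesis unfolding ph by linarith
    next
      case False
      then have "int (n-6) * int (n-1-x) \<le> int x * int (n-1-x)" by (intro mult_right_mono) auto
      then show ?thesis unfolding ph by linarith
    qed
  qed
qed

lemma phi_big: "n \<ge> 10 \<Longrightarrow> x \<ge> 2*n - 6 \<Longrightarrow> phi n x \<le> 2 * int x"
proof -
  assume n: "n \<ge> 10" and x: "x \<ge> 2*n - 6"
  define m where "m = n - 1"
  define r where "r = x mod m"
  define q where "q = x div m"
  have dm: "x = q * m + r" unfolding q_def r_def by simp
  have rl: "r < m" using n unfolding r_def m_def by simp
  have ph: "phi n x = min (5 * int r) (int (n-6) * int (n-1-r))" unfolding phi_def r_def m_def ..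
  show ?thesis
  proof (cases "q \<ge> 2")
    case True
    then have "q * m \<ge> 2 * m" by simp
    then have "x \<ge> 2 * m + r" using dm by linarith
    then have "5 * int r \<le> 2 * int x" using rl by linarith
    then show ?thesis unfolding ph by linarith
  next
    case False
    have "q \<noteq> 0"
    proof
      assume "q = 0" then have "x = r" using dm by simp
      then show False using rl x n m_def by linarith
    qed
    then have q1: "q = 1" using False by linarith
    then have "x = m + r" using dm by simp
    then have "n - 1 - r \<le> 4" using x n m_def by linarith
    then have "int (n-6) * int (n-1-r) \<le> int (n-6) * 4" by (intro mult_left_mono) auto
    also have "\<dots> \<le> 2 * int x" using x n by linarith
    finally show ?thesis unfolding ph by linarith
  qed
qed

lemma phi_mid: "n \<ge> 10 \<Longrightarrow> n \<le> x \<Longrightarrow> x < 2*n - 2 \<Longrightarrow> phi n x \<le> 5 * (int x - int n + 1)"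
proof -
  assume n: "n \<ge> 10" and x: "n \<le> x" "x < 2*n-2"
  have r: "x mod (n-1) = x - (n-1)"
  proof -
    have "x mod (n-1) = (x - (n-1)) mod (n-1)" using x le_mod_geq[of "n-1" x] by linarith
    also have "\<dots> = x - (n-1)" using x n by (intro mod_less) linarith
    finally show ?thesis .
  qed
  have ph: "phi n x = min (5 * int (x - (n-1))) (int (n-6) * int (n-1-(x-(n-1))))" unfolding phi_def r ..
  have "5 * int (x - (n-1)) = 5 * (int x - int n + 1)" using x n by (simp add: of_nat_diff)
  then show ?thesis unfolding ph by linarith
qed

lemma phi_n2: "n \<ge> 10 \<Longrightarrow> phi n (n-2) \<le> int n - 6"
proof -
  assume n: "n \<ge> 10"
  have r: "(n-2) mod (n-1) = n-2" using n by simp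
  have "n - 1 - (n-2) = 1" using n by simp
  then have ph: "phi n (n-2) = min (5 * int (n-2)) (int (n-6))" unfolding phi_def r by simp
  then show ?thesis using n by linarith
qed

lemma phi_n1: "n \<ge> 10 \<Longrightarrow> phi n (n-1) \<le> 0"
  unfolding phi_def by simp

lemma phi_0: "phi n 0 = 0"
  unfolding phi_def by simp

lemma phi_top: "n \<ge> 10 \<Longrightarrow> phi n (k*(n-1) + n - 6) = 5 * int (n-6)"
proof -
  assume n: "n \<ge> 10"
  have e: "k*(n-1) + n - 6 = (n-6) + k*(n-1)" using n by simp
  have "((n-6) + k*(n-1)) mod (n-1) = (n-6) mod (n-1)" by (rule mod_mult_self1)
  also have "\<dots> = n - 6" using n by (intro mod_less) linarith
  finally have r: "(k*(n-1) + n - 6) mod (n-1) = n - 6" unfolding e .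
  have "n - 1 - (n - 6) = 5" using n by simp
  then show ?thesis unfolding phi_def r by simp
qed




definition dS :: "nat \<Rightarrow> 'a set set \<Rightarrow> 'a set \<Rightarrow> int" where
  "dS n E S = (\<Sum>u\<in>S. int n - 2 - int (dg E u) - int (card (nb E u - S)))"

lemma removal:
  assumes sg: "simple_graph_on V E" and n: "n \<ge> 10" and S: "S \<subseteq> V"
    and hS: "phi n (card S) \<le> dS n E S"
    and hR: "phi n (card (V - S)) \<le> (\<Sum>w\<in>V-S. int n - 2 - int (dg (rm E S) w))"
  shows "phi n (card V) \<le> (\<Sum>v\<in>V. int n - 2 - int (dg E v))"
proof -
  have finV: "finite V" using sg sg_fin by blast
  have finS: "finite S" using S finV finite_subset by blast
  let ?f = "\<lambda>v. int n - 2 - int (dg E v)"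
  have sp: "(\<Sum>v\<in>V. ?f v) = (\<Sum>v\<in>V-S. ?f v) + (\<Sum>v\<in>S. ?f v)"
    using sum.subset_diff[OF S finV] by simp
  have dw: "?f w = (int n - 2 - int (dg (rm E S) w)) - int (card (nb E w \<inter> S))" if w: "w \<in> V - S" for w
  proof -
    have "dg (rm E S) w = card (nb E w - S)" unfolding dg_def using nb_rm w by (metis DiffD2)
    moreover have "dg E w = card (nb E w \<inter> S) + card (nb E w - S)"
      unfolding dg_def using card_Int_Diff sg_nb_fin[OF sg] by blast
    ultimately show ?thesis by simp
  qed
  have s1: "(\<Sum>v\<in>V-S. ?f v) = (\<Sum>w\<in>V-S. int n - 2 - int (dg (rm E S) w)) - (\<Sum>w\<in>V-S. int (card (nb E w \<inter> S)))"
  proof -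
    have "(\<Sum>v\<in>V-S. ?f v) = (\<Sum>w\<in>V-S. (int n - 2 - int (dg (rm E S) w)) - int (card (nb E w \<inter> S)))"
      using dw by (rule sum.cong[OF refl])
    then show ?thesis by (simp only: sum_subtractf)
  qed
  have sw: "(\<Sum>w\<in>V-S. card (nb E w \<inter> S)) = (\<Sum>u\<in>S. card (nb E u \<inter> (V - S)))"
    using swap finV finS by blast
  have nbeq: "nb E u \<inter> (V - S) = nb E u - S" for u using sg_nb_sub[OF sg, of u] by blast
  have s2: "(\<Sum>w\<in>V-S. int (card (nb E w \<inter> S))) = (\<Sum>u\<in>S. int (card (nb E u - S)))"
    using sw nbeq by (metis (no_types, lifting) of_nat_sum sum.cong)
  have s3: "dS n E S = (\<Sum>v\<in>S. ?f v) - (\<Sum>u\<in>S. int (card (nb E u - S)))"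
    unfolding dS_def by (simp add: sum_subtractf)
  have "(\<Sum>v\<in>V. ?f v) = dS n E S + (\<Sum>w\<in>V-S. int n - 2 - int (dg (rm E S) w))"
    using sp s1 s2 s3 by linarith
  moreover have "phi n (card V) \<le> phi n (card S) + phi n (card (V - S))"
  proof -
    have "card V = card S + card (V - S)" using card_Diff_subset[OF finS S] card_mono[OF finV S] by simp
    then show ?thesis using phi_sub[OF n, of "card S" "card (V-S)"] by simp
  qed
  ultimately show ?thesis using hS hR by linarith
qed

lemma low_ext:
  assumes sg: "simple_graph_on V E" and u: "u \<in> nb E v" and vS: "v \<in> S"
  shows "card (nb E u - S) + 1 \<le> dg E u"
proof -
  have vu: "v \<in> nb E u" using u nb_sym by metis
  have "nb E u - S \<subseteq> nb E u - {v}" using vS by blast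
  then have "card (nb E u - S) \<le> card (nb E u - {v})" using sg_nb_fin[OF sg] by (intro card_mono) auto
  also have "\<dots> = dg E u - 1" unfolding dg_def using vu sg_nb_fin[OF sg] by simp
  finally show ?thesis using vu sg_nb_fin[OF sg, of u] unfolding dg_def
    by (metis One_nat_def add_diff_cancel_left' card_gt_0_iff empty_iff le_diff_conv2 plus_1_eq_Suc Suc_leI)
qed

lemma F_ext:
  assumes sg: "simple_graph_on V E" and tf: "\<not> contains_copy V E (T3_vertices n) (T3_edges n)"
    and n: "n \<ge> 10" and u: "u \<in> nb E v" and d0: "dg E v \<ge> n - 4" and d1: "dg E u \<ge> 4"
    and Ssub: "insert v (nb E v) \<subseteq> S"
  shows "card (nb E u - S) + dg E v \<le> n - 2"
proof -
  have e: "{v,u} \<in> E" using u unfolding nb_def by simp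
  have "card (nb E u - S) \<le> card (nb E u - insert v (nb E v))"
    using Ssub sg_nb_fin[OF sg] by (intro card_mono) auto
  then show ?thesis using F[OF sg tf n e d0 d1] by linarith
qed

lemma sum_insert_nb:
  assumes sg: "simple_graph_on V E"
  shows "(\<Sum>u\<in>insert v (nb E v). f u) = f v + (\<Sum>u\<in>nb E v. f u)"
  using sg_nb_irr[OF sg] sg_nb_fin[OF sg] by simp

lemma case1:
  assumes sg: "simple_graph_on V E" and tf: "\<not> contains_copy V E (T3_vertices n) (T3_edges n)"
    and n: "n \<ge> 10" and d: "dg E v \<ge> n - 1"
  shows "5 * int (n-6) \<le> dS n E (insert v (nb E v))"
proof -
  let ?S = "insert v (nb E v)"
  let ?t = "\<lambda>u. int n - 2 - int (dg E u) - int (card (nb E u - ?S))"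
  have tu: "int n - 7 \<le> ?t u" if u: "u \<in> nb E v" for u
  proof -
    have "dg E u \<le> 3"
    proof (rule ccontr)
      assume "\<not> dg E u \<le> 3"
      then have "dg E u \<ge> 4" by simp
      have "n - 4 \<le> dg E v" using d by simp
      from F_ext[OF sg tf n u this \<open>dg E u \<ge> 4\<close> subset_refl] d n show False by (simp add: subset_insertI)
    qed
    moreover have "card (nb E u - ?S) + 1 \<le> dg E u" using low_ext[OF sg u] by simp
    ultimately show ?thesis by linarith
  qed
  have ev: "nb E v - ?S = {}" by blast
  have tv: "?t v = int n - 2 - int (dg E v)" unfolding ev by simp
  have "dS n E ?S = ?t v + (\<Sum>u\<in>nb E v. ?t u)" unfolding dS_def by (rule sum_insert_nb[OF sg])
  moreover have "(\<Sum>u\<in>nb E v. ?t u) \<ge> (\<Sum>u\<in>nb E v. int n - 7)" using tu by (intro sum_mono) auto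
  moreover have "(\<Sum>u\<in>nb E v. int n - 7) = int (dg E v) * (int n - 7)" unfolding dg_def by simp
  ultimately have A: "dS n E ?S \<ge> int n - 2 + int (dg E v) * (int n - 8)"
    unfolding tv by (simp add: algebra_simps)
  have B: "int (dg E v) * (int n - 8) \<ge> (int n - 1) * (int n - 8)"
    using d n by (intro mult_right_mono) auto
  have C: "(int n - 1) * (int n - 8) + int n - 2 - 5 * (int n - 6) = (int n - 4) * (int n - 9)"
    by (simp add: algebra_simps)
  have D: "(int n - 4) * (int n - 9) \<ge> 0" using n by simp
  have E: "5 * int (n-6) = 5 * (int n - 6)" using n by simp
  show ?thesis unfolding E using A B C D by linarith
qed

lemma case2:
  assumes sg: "simple_graph_on V E" and tf: "\<not> contains_copy V E (T3_vertices n) (T3_edges n)"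
    and n: "n \<ge> 10" and D: "\<forall>u\<in>V. dg E u \<le> n - 2" and v: "v \<in> V" and d: "dg E v = n - 2"
  shows "0 \<le> dS n E (insert v (nb E v))" and "card (insert v (nb E v)) = n - 1"
proof -
  let ?S = "insert v (nb E v)"
  let ?t = "\<lambda>u. int n - 2 - int (dg E u) - int (card (nb E u - ?S))"
  have tu: "0 \<le> ?t u" if u: "u \<in> nb E v" for u
  proof (cases "dg E u \<ge> 4")
    case True
    have "n - 4 \<le> dg E v" using d by simp
    from F_ext[OF sg tf n u this True subset_refl] d n
    have "card (nb E u - ?S) = 0" by (simp add: subset_insertI)
    moreover have "dg E u \<le> n - 2" using D u sg_nb_sub[OF sg] by auto
    ultimately show ?thesis using n by linarith
  next
    case False
    have "card (nb E u - ?S) + 1 \<le> dg E u" using low_ext[OF sg u] by simp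
    then show ?thesis using False n by linarith
  qed
  have "dS n E ?S = ?t v + (\<Sum>u\<in>nb E v. ?t u)" unfolding dS_def by (rule sum_insert_nb[OF sg])
  moreover have "?t v = 0"
  proof -
    have ev: "nb E v - ?S = {}" by blast
    show ?thesis unfolding ev using d n by simp
  qed
  moreover have "(\<Sum>u\<in>nb E v. ?t u) \<ge> 0" using tu by (intro sum_nonneg) auto
  ultimately show "0 \<le> dS n E ?S" by simp
  show "card ?S = n - 1" using d n sg_nb_irr[OF sg] sg_nb_fin[OF sg] unfolding dg_def by simp
qed

lemma case3:
  assumes sg: "simple_graph_on V E" and tf: "\<not> contains_copy V E (T3_vertices n) (T3_edges n)"
    and n: "n \<ge> 10" and D: "\<forall>u\<in>V. dg E u \<le> n - 3" and v: "v \<in> V" and d: "dg E v = n - 3"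
  shows "\<exists>S. S \<subseteq> V \<and> S \<noteq> {} \<and> phi n (card S) \<le> dS n E S"
proof -
  let ?S = "insert v (nb E v)"
  have SV: "?S \<subseteq> V" using v sg_nb_sub[OF sg] by blast
  have finS: "finite ?S" using sg_nb_fin[OF sg] by simp
  have cS: "card ?S = n - 2" using d n sg_nb_irr[OF sg] sg_nb_fin[OF sg] unfolding dg_def by simp
  have uV: "u \<in> V" if "u \<in> nb E v" for u using that sg_nb_sub[OF sg] by blast
  have d4: "n - 4 \<le> dg E v" using d by simp
  have ext1: "card (nb E u - S) \<le> 1" if u: "u \<in> nb E v" and "dg E u \<ge> 4" and "?S \<subseteq> S" for u S
    using F_ext[OF sg tf n u d4 that(2) that(3)] d n by simp
  show ?thesis
  proof (cases "\<exists>u x. u \<in> nb E v \<and> dg E u \<ge> n - 4 \<and> x \<in> nb E u \<and> x \<notin> ?S")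
    case True
    then obtain u x where u: "u \<in> nb E v" and du: "dg E u \<ge> n - 4" and x: "x \<in> nb E u" and xS: "x \<notin> ?S"
      by blast
    let ?S' = "insert x ?S"
    let ?t = "\<lambda>w. int n - 2 - int (dg E w) - int (card (nb E w - ?S'))"
    have xV: "x \<in> V" using x sg_nb_sub[OF sg] by blast
    have S'V: "?S' \<subseteq> V" using SV xV by blast
    have cS': "card ?S' = n - 1" using cS xS finS n by simp
    have du4: "dg E u \<ge> 4" using du n by simp
    have tv: "?t v = 1"
    proof -
      have "nb E v - ?S' = {}" by blast
      then show ?thesis using d n by simp
    qed
    have tu: "0 \<le> ?t u'" if u': "u' \<in> nb E v" for u'
    proof -
      have c1: "card (nb E u' - ?S') \<le> card (nb E u' - ?S)"
        using sg_nb_fin[OF sg] by (intro card_mono) auto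
      have dl: "dg E u' \<le> n - 3" using D uV[OF u'] by blast
      show ?thesis
      proof (cases "dg E u' \<ge> 4")
        case True
        then show ?thesis using ext1[OF u' True subset_refl] c1 dl n by linarith
      next
        case False
        have "card (nb E u' - ?S') + 1 \<le> dg E u'" using low_ext[OF sg u'] by simp
        then show ?thesis using False n by linarith
      qed
    qed
    have tx: "-1 \<le> ?t x"
    proof -
      have dx: "dg E x \<le> n - 3" using D xV by blast
      have c2: "card (nb E x - ?S') \<le> 2"
      proof (cases "dg E x \<ge> 4")
        case True
        have sub: "insert u (nb E u) \<subseteq> ?S'"
        proof
          fix y assume y: "y \<in> insert u (nb E u)"
          show "y \<in> ?S'"
          proof (cases "y \<in> ?S")
            case True then show ?thesis by blast
          next
            case False
            have uS: "u \<in> ?S" using u by simp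
            then have yu: "y \<noteq> u" using False by metis
            then have "y \<in> nb E u - ?S" using y False by blast
            moreover have "x \<in> nb E u - ?S" using x xS by blast
            moreover have "card (nb E u - ?S) \<le> Suc 0" using ext1[OF u du4 subset_refl] by simp
            moreover have "finite (nb E u - ?S)" using sg_nb_fin[OF sg] by simp
            ultimately have "y = x" using card_le_Suc0_iff_eq by metis
            then show ?thesis by blast
          qed
        qed
        have xu: "x \<in> nb E u" by (fact x)
        show ?thesis using F_ext[OF sg tf n xu du True sub] du by linarith
      next
        case False
        have "u \<in> ?S'" using u by blast
        then have "card (nb E x - ?S') + 1 \<le> dg E x" using low_ext[OF sg x] by simp
        then show ?thesis using False by linarith
      qed
      show ?thesis using c2 dx n by linarith
    qed
    have "dS n E ?S' = ?t x + (\<Sum>w\<in>?S. ?t w)" unfolding dS_def using xS finS by simp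
    also have "(\<Sum>w\<in>?S. ?t w) = ?t v + (\<Sum>w\<in>nb E v. ?t w)" by (rule sum_insert_nb[OF sg])
    finally have eq: "dS n E ?S' = ?t x + (?t v + (\<Sum>w\<in>nb E v. ?t w))" .
    have "(\<Sum>w\<in>nb E v. ?t w) \<ge> 0" using tu by (intro sum_nonneg) auto
    then have "dS n E ?S' \<ge> 0" using eq tx tv by linarith
    moreover have "phi n (card ?S') \<le> 0" using cS' phi_n1[OF n] by simp
    ultimately show ?thesis using S'V by (intro exI[of _ ?S']) auto
  next
    case False
    then have noext: "\<And>u. u \<in> nb E v \<Longrightarrow> dg E u \<ge> n - 4 \<Longrightarrow> nb E u - ?S = {}" by blast
    let ?t = "\<lambda>w. int n - 2 - int (dg E w) - int (card (nb E w - ?S))"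
    have tv: "?t v = 1"
    proof -
      have "nb E v - ?S = {}" by blast
      then show ?thesis using d n by simp
    qed
    have tu: "(if dg E u \<le> 3 then int n - 7 else 1) \<le> ?t u" if u: "u \<in> nb E v" for u
    proof -
      have dl: "dg E u \<le> n - 3" using D uV[OF u] by blast
      show ?thesis
      proof (cases "dg E u \<ge> n - 4")
        case True
        have "nb E u - ?S = {}" using noext[OF u True] .
        then have "card (nb E u - ?S) = 0" by (simp only: card.empty)
        then show ?thesis using dl True n by (simp; linarith)
      next
        case False
        show ?thesis
        proof (cases "dg E u \<ge> 4")
          case True
          then show ?thesis using ext1[OF u True subset_refl] False n by simp
        next
          case F2: False
          have "card (nb E u - ?S) + 1 \<le> dg E u" using low_ext[OF sg u] by simp
          then show ?thesis using F2 n by simp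
        qed
      qed
    qed
    have tu0: "0 \<le> ?t u" if "u \<in> nb E v" for u
      using tu[OF that] n by (cases "dg E u \<le> 3") simp_all
    have sumb: "(\<Sum>w\<in>nb E v. ?t w) \<ge> int n - 7"
    proof (cases "\<exists>u0\<in>nb E v. dg E u0 \<le> 3")
      case True
      then obtain u0 where u0: "u0 \<in> nb E v" "dg E u0 \<le> 3" by blast
      have "(\<Sum>w\<in>nb E v. ?t w) = ?t u0 + (\<Sum>w\<in>nb E v - {u0}. ?t w)"
        using u0 sg_nb_fin[OF sg] by (simp add: sum.remove)
      moreover have "(\<Sum>w\<in>nb E v - {u0}. ?t w) \<ge> 0" using tu0 by (intro sum_nonneg) auto
      moreover have "?t u0 \<ge> int n - 7" using tu[OF u0(1)] u0(2) by simp
      ultimately show ?thesis by linarith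
    next
      case False
      have one: "1 \<le> ?t w" if w: "w \<in> nb E v" for w
      proof -
        have "\<not> dg E w \<le> 3" using False w by blast
        then show ?thesis using tu[OF w] by simp
      qed
      have "(\<Sum>w\<in>nb E v. ?t w) \<ge> (\<Sum>w\<in>nb E v. 1)" using one by (intro sum_mono) auto
      moreover have "(\<Sum>w\<in>nb E v. (1::int)) = int (n - 3)" using d unfolding dg_def by simp
      ultimately show ?thesis using n by linarith
    qed
    have "dS n E ?S = ?t v + (\<Sum>w\<in>nb E v. ?t w)" unfolding dS_def by (rule sum_insert_nb[OF sg])
    then have "dS n E ?S \<ge> int n - 6" using tv sumb by linarith
    moreover have "phi n (card ?S) \<le> int n - 6" using cS phi_n2[OF n] by simp
    ultimately show ?thesis using SV by (intro exI[of _ ?S]) auto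
  qed
qed

lemma card_nb_le: assumes sg: "simple_graph_on V E" shows "dg E v + 1 \<le> card V \<or> v \<notin> V"
proof (cases "v \<in> V")
  case True
  have "nb E v \<subseteq> V - {v}" using sg_nb_sub[OF sg] sg_nb_irr[OF sg] by blast
  then have "dg E v \<le> card (V - {v})" unfolding dg_def using sg_fin[OF sg] by (intro card_mono) auto
  moreover have "card (V - {v}) + 1 = card V" using True sg_fin[OF sg] card_Diff_singleton card_gt_0_iff
    by (metis Suc_eq_plus1 Suc_pred' empty_iff)
  ultimately show ?thesis by linarith
qed simp

lemma sum_ind_card:
  assumes "finite V"
  shows "(\<Sum>w\<in>V. if P w then (1::int) else 0) = int (card {w\<in>V. P w})"
proof -
  have "(\<Sum>w\<in>V. if P w then (1::int) else 0) = (\<Sum>w\<in>{w\<in>V. P w}. 1)"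
    by (rule sum.inter_filter[symmetric]) (fact assms)
  then show ?thesis by simp
qed

lemma case4:
  assumes sg: "simple_graph_on V E" and tf: "\<not> contains_copy V E (T3_vertices n) (T3_edges n)"
    and n: "n \<ge> 10" and D: "\<forall>u\<in>V. dg E u \<le> n - 4"
  shows "phi n (card V) \<le> (\<Sum>v\<in>V. int n - 2 - int (dg E v))"
proof -
  let ?p = "card V"
  let ?F = "(\<Sum>v\<in>V. int n - 2 - int (dg E v))"
  have finV: "finite V" using sg_fin[OF sg] .
  have F2: "?F \<ge> 2 * int ?p"
  proof -
    have "?F \<ge> (\<Sum>v\<in>V. 2)"
    proof (intro sum_mono)
      fix v assume "v \<in> V"
      then have "dg E v \<le> n - 4" using D by blast
      then show "2 \<le> int n - 2 - int (dg E v)" using n by linarith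
    qed
    then show ?thesis by simp
  qed
  show ?thesis
  proof (cases "?p \<le> n - 1")
    case True
    have "?F \<ge> (\<Sum>v\<in>V. int n - 1 - int ?p)"
    proof (intro sum_mono)
      fix v assume "v \<in> V"
      then have "dg E v + 1 \<le> ?p" using card_nb_le[OF sg, of v] by auto
      then show "int n - 1 - int ?p \<le> int n - 2 - int (dg E v)" by linarith
    qed
    also have "(\<Sum>v\<in>V. int n - 1 - int ?p) = int ?p * int (n - 1 - ?p)" using True n by (simp add: of_nat_diff)
    finally show ?thesis using phi_small[OF n True] by linarith
  next
    case pbig: False
    show ?thesis
    proof (cases "?p \<ge> 2 * n - 6")
      case True then show ?thesis using phi_big[OF n True] F2 by linarith
    next
      case False
      then have pm: "phi n ?p \<le> 5 * int ?p - 5 * int n + 5" using phi_mid[OF n] pbig by (simp add: algebra_simps)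
      have pl: "?p \<le> 2 * n - 7" using False n by linarith
      have pli: "int ?p \<le> 2 * int n - 7" using pl n by linarith
      have goal: "?F \<ge> 5 * int ?p - 5 * int n + 5"
      proof (cases "3 * ?p \<le> 5 * n - 5")
        case True
        then have "int (3 * ?p) \<le> int (5 * n - 5)" by (simp only: of_nat_le_iff)
        then have "3 * int ?p \<le> 5 * int n - 5" using n by (simp add: of_nat_diff)
        then have "5 * int ?p - 5 * int n + 5 \<le> 2 * int ?p" by linarith
        then show ?thesis using F2 by (rule order_trans)
      next
        case p3: False
        show ?thesis
        proof (cases "\<forall>u\<in>V. dg E u \<le> n - 5")
          case True
          have "?F \<ge> (\<Sum>v\<in>V. 3)"
          proof (intro sum_mono)
            fix v assume "v \<in> V"
            then have "dg E v \<le> n - 5" using True by blast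
            then show "3 \<le> int n - 2 - int (dg E v)" using n by linarith
          qed
          then show ?thesis using pli n by simp
        next
          case False
          then obtain v where v: "v \<in> V" and "\<not> dg E v \<le> n - 5" by blast
          moreover have "dg E v \<le> n - 4" using D v by blast
          ultimately have dv: "dg E v = n - 4" using n by linarith
          let ?Nv = "insert v (nb E v)"
          define Big where "Big = {w\<in>V. dg E w = n - 4}"
          define Bout where "Bout = Big - ?Nv"
          have NvV: "?Nv \<subseteq> V" using v sg_nb_sub[OF sg] by blast
          have finNv: "finite ?Nv" using sg_nb_fin[OF sg] by simp
          have cNv: "card ?Nv = n - 3" using dv n sg_nb_irr[OF sg] sg_nb_fin[OF sg] unfolding dg_def by simp
          have d4: "n - 4 \<le> dg E v" using dv by simp
          have Fbig: "?F \<ge> 3 * int ?p - int (card Big)"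
          proof -
            have e2: "(\<Sum>w\<in>V. 3 - (if dg E w = n - 4 then 1 else 0)) \<le> ?F"
            proof (intro sum_mono)
              fix w assume "w \<in> V"
              then have "dg E w \<le> n - 4" using D by blast
              then show "3 - (if dg E w = n - 4 then 1 else 0) \<le> int n - 2 - int (dg E w)"
                using n by (cases "dg E w = n - 4") auto
            qed
            have e1: "(\<Sum>w\<in>V. 3 - (if dg E w = n - 4 then (1::int) else 0)) = 3 * int ?p - (\<Sum>w\<in>V. if dg E w = n - 4 then 1 else 0)"
              by (simp add: sum_subtractf)
            have e3: "(\<Sum>w\<in>V. if dg E w = n - 4 then (1::int) else 0) = int (card Big)"
              unfolding Big_def by (rule sum_ind_card[OF finV])
            show ?thesis using e1 e2 e3 by linarith
          qed
          show ?thesis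
          proof (cases "\<exists>w\<in>Bout. card (nb E v \<inter> nb E w) \<le> n - 8")
            case True
            then obtain w where w: "w \<in> Bout" and tI: "card (nb E v \<inter> nb E w) \<le> n - 8" by blast
            define I where "I = nb E v \<inter> nb E w"
            let ?Nw = "insert w (nb E w)"
            have wV: "w \<in> V" and dw: "dg E w = n - 4" and wNv: "w \<notin> ?Nv"
              using w unfolding Bout_def Big_def by auto
            have vw: "v \<noteq> w" using wNv by blast
            have "w \<notin> nb E v" using wNv by blast
            then have "v \<notin> nb E w" using nb_sym by metis
            then have vNw: "v \<notin> ?Nw" using vw by blast
            have NwV: "?Nw \<subseteq> V" using wV sg_nb_sub[OF sg] by blast
            have finNw: "finite ?Nw" using sg_nb_fin[OF sg] by simp
            have cNw: "card ?Nw = n - 3" using dw n sg_nb_irr[OF sg] sg_nb_fin[OF sg] unfolding dg_def by simp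
            have NI: "?Nv \<inter> ?Nw = I" unfolding I_def using wNv vNw by blast
            have finI: "finite I" unfolding I_def using sg_nb_fin[OF sg] by simp
            have "card ?Nv + card ?Nw = card (?Nv \<union> ?Nw) + card I"
              using card_Un_Int[OF finNv finNw] NI by simp
            moreover have "card (?Nv \<union> ?Nw) \<le> ?p" using NvV NwV finV by (intro card_mono) auto
            ultimately have t1: "card I \<ge> 1" using cNv cNw pl n by linarith
            have t2: "card I \<le> n - 8" using tI I_def by simp
            have dI: "dg E u \<le> card I + 3" if u: "u \<in> I" for u
            proof (cases "dg E u \<ge> 4")
              case False then show ?thesis by simp
            next
              case True
              have uv: "u \<in> nb E v" and uw: "u \<in> nb E w" using u I_def by auto
              have c1: "card (nb E u - ?Nv) \<le> 2" using F_ext[OF sg tf n uv d4 True subset_refl] dv n by linarith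
              have d4w: "n - 4 \<le> dg E w" using dw by simp
              have c2: "card (nb E u - ?Nw) \<le> 2" using F_ext[OF sg tf n uw d4w True subset_refl] dw n by linarith
              have sub: "nb E u \<subseteq> (nb E u - ?Nv) \<union> (nb E u - ?Nw) \<union> (I - {u})"
                using NI sg_nb_irr[OF sg, of u] by blast
              have "card (nb E u) \<le> card ((nb E u - ?Nv) \<union> (nb E u - ?Nw) \<union> (I - {u}))"
                using sg_nb_fin[OF sg] finI by (intro card_mono[OF _ sub]) auto
              also have "\<dots> \<le> card (nb E u - ?Nv) + card (nb E u - ?Nw) + card (I - {u})"
                by (meson card_Un_le le_trans add_le_mono order_refl)
              also have "card (I - {u}) = card I - 1" using u finI by simp
              finally show ?thesis unfolding dg_def using c1 c2 t1 by linarith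
            qed
            have IV: "I \<subseteq> V" using I_def sg_nb_sub[OF sg] by blast
            have "?F = (\<Sum>v\<in>V-I. int n - 2 - int (dg E v)) + (\<Sum>v\<in>I. int n - 2 - int (dg E v))"
              using sum.subset_diff[OF IV finV] by simp
            moreover have "(\<Sum>v\<in>V-I. int n - 2 - int (dg E v)) \<ge> (\<Sum>v\<in>V-I. 2)"
            proof (intro sum_mono)
              fix v assume "v \<in> V - I"
              then have "dg E v \<le> n - 4" using D by blast
              then show "2 \<le> int n - 2 - int (dg E v)" using n by linarith
            qed
            moreover have "(\<Sum>v\<in>I. int n - 2 - int (dg E v)) \<ge> (\<Sum>v\<in>I. int n - 5 - int (card I))"
            proof (intro sum_mono)
              fix v assume "v \<in> I"
              then have "dg E v \<le> card I + 3" by (rule dI)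
              then show "int n - 5 - int (card I) \<le> int n - 2 - int (dg E v)" by linarith
            qed
            moreover have "card (V - I) = ?p - card I" using card_Diff_subset[OF finI IV] .
            moreover have "card I \<le> ?p" using card_mono[OF finV IV] .
            ultimately have Fge: "?F \<ge> 2 * (int ?p - int (card I)) + int (card I) * (int n - 5 - int (card I))"
              by (simp add: of_nat_diff)
            define t where "t = int (card I)"
            have tt: "1 \<le> t" "t \<le> int n - 8" using t1 t2 n unfolding t_def by linarith+
            have nn: "0 \<le> (t - 1) * (int n - 8 - t)" using tt by simp
            have id: "t * (int n - 5 - t) = (t - 1) * (int n - 8 - t) + 2 * t + int n - 8"
              by (simp add: algebra_simps)
            show ?thesis using Fge nn id pli n unfolding t_def[symmetric] by arith
          next
            case False
            have B7: "\<forall>w\<in>Bout. n - 7 \<le> card (nb E v \<inter> nb E w)"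
            proof
              fix w assume "w \<in> Bout"
              then have "\<not> card (nb E v \<inter> nb E w) \<le> n - 8" using False by blast
              then show "n - 7 \<le> card (nb E v \<inter> nb E w)" using n by linarith
            qed
            have finB: "finite Bout" unfolding Bout_def Big_def using finV by simp
            have "card Bout * (n - 7) \<le> (\<Sum>w\<in>Bout. card (nb E w \<inter> nb E v))"
            proof -
              have "(\<Sum>w\<in>Bout. n - 7) \<le> (\<Sum>w\<in>Bout. card (nb E w \<inter> nb E v))"
                using B7 by (intro sum_mono) (simp add: Int_commute)
              then show ?thesis by simp
            qed
            also have "\<dots> = (\<Sum>u\<in>nb E v. card (nb E u \<inter> Bout))"
              using swap[OF finB sg_nb_fin[OF sg]] .
            also have "\<dots> \<le> (\<Sum>u\<in>nb E v. 2)"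
            proof (intro sum_mono)
              fix u assume u: "u \<in> nb E v"
              have "nb E u \<inter> Bout \<subseteq> nb E u - ?Nv" unfolding Bout_def by blast
              then have le: "card (nb E u \<inter> Bout) \<le> card (nb E u - ?Nv)"
                using sg_nb_fin[OF sg] by (intro card_mono) auto
              show "card (nb E u \<inter> Bout) \<le> 2"
              proof (cases "dg E u \<ge> 4")
                case True
                then show ?thesis using F_ext[OF sg tf n u d4 True subset_refl] dv n le by linarith
              next
                case False
                have "card (nb E u - ?Nv) + 1 \<le> dg E u" using low_ext[OF sg u] by simp
                then show ?thesis using False le by linarith
              qed
            qed
            also have "\<dots> = 2 * (n - 4)" using dv unfolding dg_def by simp
            finally have cb: "card Bout * (n - 7) \<le> 2 * (n - 4)" .
            have cb12: "card Bout \<le> 12"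
            proof (rule ccontr)
              assume "\<not> card Bout \<le> 12"
              then have "13 * (n - 7) \<le> card Bout * (n - 7)" by (intro mult_right_mono) auto
              then show False using cb n by linarith
            qed
            have "Big \<subseteq> ?Nv \<union> Bout" unfolding Bout_def by blast
            then have "card Big \<le> card (?Nv \<union> Bout)" using finNv finB by (intro card_mono) auto
            also have "\<dots> \<le> card ?Nv + card Bout" by (rule card_Un_le)
            finally have "card Big \<le> n + 9" using cNv cb12 n by linarith
            then show ?thesis using Fbig pli n by linarith
          qed
        qed
      qed
      show ?thesis using goal pm by linarith
    qed
  qed
qed



lemma mainlem:
  assumes n: "n \<ge> 10"
  shows "simple_graph_on V E \<Longrightarrow> \<not> contains_copy V E (T3_vertices n) (T3_edges n)
    \<Longrightarrow> phi n (card V) \<le> (\<Sum>v\<in>V. int n - 2 - int (dg E v))"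
proof (induction "card V" arbitrary: V E rule: less_induct)
  case less
  note sg = less.prems(1) and tf = less.prems(2)
  have finV: "finite V" using sg sg_fin by blast
  show ?case
  proof (cases "V = {}")
    case True then show ?thesis by (simp add: phi_0)
  next
    case Vne: False
    have step: "phi n (card V) \<le> (\<Sum>v\<in>V. int n - 2 - int (dg E v))"
      if S: "S \<subseteq> V" "S \<noteq> {}" "phi n (card S) \<le> dS n E S" for S
    proof -
      have lt: "card (V - S) < card V"
      proof (rule psubset_card_mono[OF finV])
        obtain s where "s \<in> S" using S(2) by blast
        then show "V - S \<subset> V" using S(1) by blast
      qed
      have IH: "phi n (card (V - S)) \<le> (\<Sum>w\<in>V-S. int n - 2 - int (dg (rm E S) w))"
        using less.hyps[OF lt sg_rm[OF sg] tf_rm[OF tf]] .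
      show ?thesis by (rule removal[OF sg n S(1) S(3) IH])
    qed
    have nbS: "insert v (nb E v) \<subseteq> V" "insert v (nb E v) \<noteq> {}" if "v \<in> V" for v
      using that sg_nb_sub[OF sg] by auto
    show ?thesis
    proof (cases "\<exists>v\<in>V. dg E v \<ge> n - 1")
      case True
      then obtain v where v: "v \<in> V" "dg E v \<ge> n - 1" by blast
      have "phi n (card (insert v (nb E v))) \<le> dS n E (insert v (nb E v))"
        using case1[OF sg tf n v(2)] phi_le5[OF n] by (meson order_trans)
      then show ?thesis using step nbS[OF v(1)] by blast
    next
      case F1: False
      then have D2: "\<forall>u\<in>V. dg E u \<le> n - 2" by force
      show ?thesis
      proof (cases "\<exists>v\<in>V. dg E v = n - 2")
        case True
        then obtain v where v: "v \<in> V" "dg E v = n - 2" by blast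
        have "phi n (card (insert v (nb E v))) \<le> dS n E (insert v (nb E v))"
          using case2[OF sg tf n D2 v] phi_n1[OF n] by simp
        then show ?thesis using step nbS[OF v(1)] by blast
      next
        case F2: False
        then have D3: "\<forall>u\<in>V. dg E u \<le> n - 3" using D2 n by force
        show ?thesis
        proof (cases "\<exists>v\<in>V. dg E v = n - 3")
          case True
          then obtain v where v: "v \<in> V" "dg E v = n - 3" by blast
          then show ?thesis using case3[OF sg tf n D3 v] step by blast
        next
          case False
          then have D4: "\<forall>u\<in>V. dg E u \<le> n - 4" using D3 n by force
          show ?thesis using case4[OF sg tf n D4] .
        qed
      qed
    qed
  qed
qed

lemma handshake_gen:
  assumes "finite F" "finite V" "\<forall>e\<in>F. \<exists>a b. a \<in> V \<and> b \<in> V \<and> a \<noteq> b \<and> e = {a,b}"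
  shows "(\<Sum>v\<in>V. card (nb F v)) = 2 * card F"
  using assms
proof (induction F rule: finite_induct)
  case empty then show ?case unfolding nb_def by simp
next
  case (insert e F)
  obtain a b where ab: "a \<in> V" "b \<in> V" "a \<noteq> b" "e = {a,b}" using insert.prems by blast
  have finnb: "finite (nb F v)" for v
  proof -
    have "nb F v \<subseteq> V" unfolding nb_def using insert.prems by (auto simp: doubleton_eq_iff)
    then show ?thesis using insert.prems(1) finite_subset by blast
  qed
  have c: "card (nb (insert e F) v) = card (nb F v) + (if v \<in> {a,b} then 1 else 0)" for v
  proof (cases "v = a")
    case True
    have "nb (insert e F) v = insert b (nb F v)" unfolding nb_def ab(4) True using ab(3) by (auto simp: doubleton_eq_iff)
    moreover have "b \<notin> nb F v" unfolding nb_def using insert.hyps(2) ab(4) True by simp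
    ultimately show ?thesis using finnb True by simp
  next
    case va: False
    show ?thesis
    proof (cases "v = b")
      case True
      have "nb (insert e F) v = insert a (nb F v)" unfolding nb_def ab(4) True using ab(3) by (auto simp: doubleton_eq_iff)
      moreover have "a \<notin> nb F v" unfolding nb_def using insert.hyps(2) ab(4) True by (simp add: insert_commute)
      ultimately show ?thesis using finnb True va by simp
    next
      case False
      have "nb (insert e F) v = nb F v" unfolding nb_def ab(4) using va False by (auto simp: doubleton_eq_iff)
      then show ?thesis using va False by simp
    qed
  qed
  have "(\<Sum>v\<in>V. card (nb (insert e F) v)) = (\<Sum>v\<in>V. card (nb F v)) + (\<Sum>v\<in>V. if v \<in> {a,b} then 1 else 0)"
    unfolding c by (simp add: sum.distrib)
  also have "(\<Sum>v\<in>V. if v \<in> {a,b} then (1::nat) else 0) = card {v \<in> V. v \<in> {a,b}}"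
  proof -
    have "(\<Sum>v\<in>V. if v \<in> {a,b} then (1::nat) else 0) = (\<Sum>v\<in>{v \<in> V. v \<in> {a,b}}. 1)"
      by (rule sum.inter_filter[symmetric]) (fact insert.prems(1))
    then show ?thesis by simp
  qed
  also have "{v \<in> V. v \<in> {a,b}} = {a,b}" using ab by auto
  finally show ?case using insert ab(3) by simp
qed

lemma handshake:
  assumes sg: "simple_graph_on V E"
  shows "(\<Sum>v\<in>V. dg E v) = 2 * card E"
proof -
  have finV: "finite V" using sg sg_fin by blast
  have "E \<subseteq> Pow V" using sg unfolding simple_graph_on_def by auto
  then have "finite E" using finV finite_subset by blast
  moreover have "\<forall>e\<in>E. \<exists>a b. a \<in> V \<and> b \<in> V \<and> a \<noteq> b \<and> e = {a,b}" using sg unfolding simple_graph_on_def by auto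
  ultimately show ?thesis unfolding dg_def using handshake_gen finV by blast
qed

lemma upper:
  assumes n: "n \<ge> 10" and sg: "simple_graph_on {0..<p} E"
    and tf: "\<not> contains_copy {0..<p} E (T3_vertices n) (T3_edges n)" and p: "p = k * (n - 1) + n - 6"
  shows "2 * int (card E) \<le> int (n - 2) * int p - 5 * int (n - 6)"
proof -
  have "phi n (card {0..<p}) \<le> (\<Sum>v\<in>{0..<p}. int n - 2 - int (dg E v))" by (rule mainlem[OF n sg tf])
  moreover have "phi n (card {0..<p}) = 5 * int (n-6)" using phi_top[OF n, of k] p by simp
  moreover have "(\<Sum>v\<in>{0..<p}. int n - 2 - int (dg E v)) = int p * (int n - 2) - int (\<Sum>v\<in>{0..<p}. dg E v)"
    by (simp add: sum_subtractf)
  moreover have "(\<Sum>v\<in>{0..<p}. dg E v) = 2 * card E" by (rule handshake[OF sg])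
  moreover have "int (n - 2) = int n - 2" using n by simp
  ultimately show ?thesis by (simp add: algebra_simps)
qed

definition W :: "nat \<Rightarrow> nat \<Rightarrow> nat set set" where
  "W m p = {{x,y} | x y. x < p \<and> y < p \<and> x \<noteq> y \<and> x div m = y div m}"

lemma W_mem: "{x,y} \<in> W m p \<longleftrightarrow> x < p \<and> y < p \<and> x \<noteq> y \<and> x div m = y div m"
  unfolding W_def by (auto simp: doubleton_eq_iff)

lemma sg_W: "simple_graph_on {0..<p} (W m p)"
  unfolding simple_graph_on_def W_def by auto

lemma nb_W: "x < p \<Longrightarrow> nb (W m p) x = {y. y < p \<and> y div m = x div m} - {x}"
  unfolding nb_def using W_mem by auto

lemma blk: "(m::nat) > 0 \<Longrightarrow> {y. y div m = q} = {q*m..<q*m+m}"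
proof (intro set_eqI iffI)
  fix y assume m: "m > 0" and "y \<in> {y. y div m = q}"
  then have y: "y div m = q" by simp
  have "q * m \<le> y" using div_times_less_eq_dividend[of y m] y by simp
  moreover have "y < m + q * m" using dividend_less_div_times[OF m, of y] y by simp
  ultimately show "y \<in> {q*m..<q*m+m}" by simp
next
  fix y assume m: "m > 0" and "y \<in> {q*m..<q*m+m}"
  then have "m * q \<le> y" "y < m * Suc q" by (auto simp: algebra_simps)
  then show "y \<in> {y. y div m = q}" using div_nat_eqI by simp
qed

lemma dg_W1:
  assumes m: "m > 0" and x: "x < k * m" and p: "k * m \<le> p"
  shows "dg (W m p) x = m - 1"
proof -
  let ?q = "x div m"
  have q: "?q < k" using x m by (simp add: div_less_iff_less_mult)
  then have "?q * m + m \<le> k * m" by (metis Suc_leI mult_Suc mult_le_mono1 add.commute)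
  then have "{y. y < p \<and> y div m = ?q} = {?q*m..<?q*m+m}" using blk[OF m, of ?q] p by auto
  moreover have "x \<in> {?q*m..<?q*m+m}" using blk[OF m, of ?q] by auto
  ultimately show ?thesis unfolding dg_def using nb_W[of x p m] x p by simp
qed

lemma dg_W2:
  assumes m: "m > 0" and x: "k * m \<le> x" "x < p" and p: "p \<le> k * m + m"
  shows "dg (W m p) x = p - k * m - 1"
proof -
  have a1: "m * k \<le> x" using x(1) by (simp add: mult.commute)
  have a2: "x < m * Suc k" using x(2) p by (simp add: mult.commute)
  have q: "x div m = k" by (rule div_nat_eqI[OF a1 a2])
  have "{y. y < p \<and> y div m = k} = {y. y div m = k} \<inter> {..<p}" by blast
  also have "\<dots> = {k*m..<k*m+m} \<inter> {..<p}" using blk[OF m, of k] by simp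
  also have "\<dots> = {k*m..<p}" using p by (simp add: set_eq_iff) arith
  finally have "{y. y < p \<and> y div m = k} = {k*m..<p}" .
  then show ?thesis unfolding dg_def using nb_W[of x p m] x q by simp
qed

lemma W_count:
  assumes n: "n \<ge> 10" and p: "p = k * (n - 1) + n - 6"
  shows "2 * int (card (W (n-1) p)) = int (n - 2) * int p - 5 * int (n - 6)"
proof -
  let ?m = "n - 1"
  have m: "?m > 0" using n by simp
  have p1: "k * ?m \<le> p" "p \<le> k * ?m + ?m" using p n by auto
  have "(\<Sum>x\<in>{0..<p}. dg (W ?m p) x) = (\<Sum>x\<in>{0..<k*?m}. dg (W ?m p) x) + (\<Sum>x\<in>{k*?m..<p}. dg (W ?m p) x)"
    by (rule sum.atLeastLessThan_concat[symmetric]) (use p1 in auto)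
  also have "(\<Sum>x\<in>{0..<k*?m}. dg (W ?m p) x) = (\<Sum>x\<in>{0..<k*?m}. ?m - 1)"
    using dg_W1[OF m _ p1(1)] by (intro sum.cong) auto
  also have "(\<Sum>x\<in>{k*?m..<p}. dg (W ?m p) x) = (\<Sum>x\<in>{k*?m..<p}. p - k * ?m - 1)"
    using dg_W2[OF m _ _ p1(2)] by (intro sum.cong) auto
  finally have s: "(\<Sum>x\<in>{0..<p}. dg (W ?m p) x) = k * ?m * (?m - 1) + (p - k * ?m) * (p - k * ?m - 1)"
    by simp
  have pk: "p - k * ?m = n - 6" using p n by simp
  have eq: "2 * card (W ?m p) = k * ?m * (?m - 1) + (n - 6) * (n - 7)"
  proof -
    have h: "(\<Sum>x\<in>{0..<p}. dg (W ?m p) x) = 2 * card (W ?m p)" by (rule handshake[OF sg_W[where p=p and m="?m"]])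
    have "p - k * ?m - 1 = n - 7" using pk by simp
    then show ?thesis using h s pk by simp
  qed
  have c: "int (n-1) = int n - 1" "int (n-1-1) = int n - 2" "int (n-6) = int n - 6" "int (n-7) = int n - 7"
    "int (n-2) = int n - 2" using n by auto
  have "int (2 * card (W ?m p)) = int (k * ?m * (?m - 1) + (n - 6) * (n - 7))" using eq by simp
  then have A: "2 * int (card (W ?m p)) = int k * (int n - 1) * (int n - 2) + (int n - 6) * (int n - 7)"
    by (simp only: of_nat_add of_nat_mult c of_nat_numeral)
  have "p = k * ?m + (n - 6)" using p n by simp
  then have "int p = int k * int ?m + int (n - 6)" by simp
  then have B: "int p = int k * (int n - 1) + int n - 6" using c by simp
  show ?thesis unfolding B A c by (simp add: algebra_simps)
qed

lemma W_tfree: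
  assumes n: "n \<ge> 10"
  shows "\<not> contains_copy {0..<p} (W (n-1) p) (T3_vertices n) (T3_edges n)"
proof
  let ?m = "n - 1"
  have m: "?m > 0" using n by simp
  assume "contains_copy {0..<p} (W ?m p) (T3_vertices n) (T3_edges n)"
  then obtain f where inj: "inj_on f {0..<n}" and ed: "\<forall>u v. {u, v} \<in> T3_edges n \<longrightarrow> {f u, f v} \<in> W ?m p"
    unfolding contains_copy_def T3_vertices_def by blast
  have same: "f u div ?m = f v div ?m" if "{u,v} \<in> T3_edges n" for u v
    using ed that W_mem by blast
  have e0: "f i div ?m = f 0 div ?m" if "1 \<le> i" "i \<le> n - 4" for i
  proof -
    have "{0,i} \<in> T3_edges n" unfolding T3_edges_def using that by blast
    then show ?thesis using same by metis
  qed
  have f1: "f 1 div ?m = f 0 div ?m" using e0[of 1] n by simp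
  have e1: "f i div ?m = f 0 div ?m" if "i \<in> {n-3, n-2, n-1}" for i
  proof -
    have "{1,i} \<in> T3_edges n" unfolding T3_edges_def using that by blast
    then show ?thesis using same f1 by metis
  qed
  have all: "f i div ?m = f 0 div ?m" if "i < n" for i
  proof -
    have "i = 0 \<or> (1 \<le> i \<and> i \<le> n - 4) \<or> i = n-3 \<or> i = n-2 \<or> i = n-1" using that n by presburger
    then show ?thesis
    proof (elim disjE)
      assume "1 \<le> i \<and> i \<le> n - 4" then show ?thesis using e0 by blast
    next
      assume "i = n - 3" then show ?thesis using e1[of i] by blast
    next
      assume "i = n - 2" then show ?thesis using e1[of i] by blast
    next
      assume "i = n - 1" then show ?thesis using e1[of i] by blast
    qed simp
  qed
  have "f ` {0..<n} \<subseteq> {y. y div ?m = f 0 div ?m}"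
  proof
    fix y assume "y \<in> f ` {0..<n}"
    then obtain i where i: "i < n" "y = f i" by auto
    show "y \<in> {y. y div ?m = f 0 div ?m}" using all[OF i(1)] i(2) by simp
  qed
  also have "\<dots> = {f 0 div ?m * ?m..<f 0 div ?m * ?m + ?m}" by (rule blk[OF m])
  finally have sub: "f ` {0..<n} \<subseteq> {f 0 div ?m * ?m..<f 0 div ?m * ?m + ?m}" .
  have "card (f ` {0..<n}) \<le> card {f 0 div ?m * ?m..<f 0 div ?m * ?m + ?m}"
    by (rule card_mono[OF _ sub]) simp
  then have "card (f ` {0..<n}) \<le> ?m" by simp
  moreover have "card (f ` {0..<n}) = n" using card_image[OF inj] by simp
  ultimately show False using n by simp
qed

theorem theorem4p3:
  fixes p n k :: nat
  assumes "n \<ge> 10" and "p \<ge> n" and "k \<ge> 1" and "p = k * (n - 1) + n - 6"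
  shows "real (ex p (T3_vertices n) (T3_edges n)) = (real (n - 2) * real p - 5 * real (n - 6)) / 2"
proof -
  note n = assms(1) and p = assms(4)
  let ?A = "{card E | E. simple_graph_on {0..<p} E \<and> \<not> contains_copy {0..<p} E (T3_vertices n) (T3_edges n)}"
  let ?W = "W (n-1) p"
  have fin: "finite ?A"
  proof -
    have "?A \<subseteq> card ` Pow (Pow {0..<p})" unfolding simple_graph_on_def by blast
    then show ?thesis using finite_subset by blast
  qed
  have mem: "card ?W \<in> ?A" using sg_W W_tfree[OF n] by blast
  have ub: "y \<le> card ?W" if "y \<in> ?A" for y
  proof -
    obtain E where E: "y = card E" "simple_graph_on {0..<p} E" "\<not> contains_copy {0..<p} E (T3_vertices n) (T3_edges n)"
      using \<open>y \<in> ?A\<close> by blast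
    have "2 * int (card E) \<le> 2 * int (card ?W)" using upper[OF n E(2) E(3) p] W_count[OF n p] by simp
    then show ?thesis using E(1) by simp
  qed
  have "ex p (T3_vertices n) (T3_edges n) = card ?W" unfolding ex_def by (rule Max_eqI[OF fin ub mem])
  moreover have "2 * real (card ?W) = real (n - 2) * real p - 5 * real (n - 6)"
  proof -
    have "real_of_int (2 * int (card ?W)) = real_of_int (int (n - 2) * int p - 5 * int (n - 6))"
      using W_count[OF n p] by simp
    then show ?thesis by simp
  qed
  ultimately show ?thesis by simp
qed


end
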